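(* Let $n$ be a positive integer and let $G$ be a pure $(2n+1)$-sparse gapset of genus $g=3n+2$ with depth $q$. Then $q\le 3$. In particular, if $G$ is pseudo-symmetric, then $q=3$.
   Context: A gapset is a finite set $G\subset\mathbb{N}=\{1,2,\dots\}$ such that whenever $z\in G$ and $z=x+y$ with $x,y\in\mathbb{N}$, then $x\in G$ or $y\in G$; its genus is $g=\#G$. Writing $G=\{\ell_1<\dots<\ell_g\}$: multiplicity $m(G)=\min\{s\in\mathbb{N}:s\notin G\}$; conductor $c(G)=\min\{s\in\mathbb{N}: s+t\notin G\ \forall t\in\mathbb{N}_0\}$; Frobenius number $F(G)=c(G)-1=\ell_g$; depth $q(G)=\lceil c(G)/m(G)\rceil$. $G$ is pseudo-symmetric if $F(G)=2g-2$. $G$ is pure $\kappa$-sparse if $\ell_{i+1}-\ell_i\le\kappa$ for all $i$ with equality for some $i$. *)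

theory Defs
  imports Complex_Main
begin

definition gapset :: "nat set \<Rightarrow> bool" where
  "gapset G \<longleftrightarrow> finite G \<and> 0 \<notin> G \<and>
     (\<forall>z\<in>G. \<forall>x y. x \<ge> 1 \<and> y \<ge> 1 \<and> z = x + y \<longrightarrow> x \<in> G \<or> y \<in> G)"

definition genus :: "nat set \<Rightarrow> nat" where
  "genus G = card G"

definition multiplicity :: "nat set \<Rightarrow> nat" where
  "multiplicity G = (LEAST s. s \<ge> 1 \<and> s \<notin> G)"

definition conductor :: "nat set \<Rightarrow> nat" where
  "conductor G = (LEAST s. s \<ge> 1 \<and> (\<forall>t::nat. s + t \<notin> G))"

definition frobenius :: "nat set \<Rightarrow> nat" where
  "frobenius G = conductor G - 1"

definition depth :: "nat set \<Rightarrow> nat" where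
  "depth G = nat \<lceil>real (conductor G) / real (multiplicity G)\<rceil>"

definition pseudo_symmetric :: "nat set \<Rightarrow> bool" where
  "pseudo_symmetric G \<longleftrightarrow> int (frobenius G) = 2 * int (genus G) - 2"

text \<open>Elements listed increasingly: l_1 < ... < l_g is sorted_list_of_set G (0-indexed).\<close>
definition pure_sparse :: "nat \<Rightarrow> nat set \<Rightarrow> bool" where
  "pure_sparse \<kappa> G \<longleftrightarrow>
     (let L = sorted_list_of_set G in
       (\<forall>i. i + 1 < length L \<longrightarrow> L ! (i+1) - L ! i \<le> \<kappa>) \<and>
       (\<exists>i. i + 1 < length L \<and> L ! (i+1) - L ! i = \<kappa>))"

end

theory Submission
  imports Defs
begin

lemma gap_add:
  assumes "gapset G" "x \<notin> G" "y \<notin> G" "x \<ge> 1" "y \<ge> 1"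
  shows "x + y \<notin> G"
  using assms unfolding gapset_def by blast

lemma gap_sub:
  assumes "gapset G" "z \<in> G" "s \<notin> G" "s \<ge> 1" "s < z"
  shows "z - s \<in> G"
proof -
  have "z = s + (z - s)" using assms by simp
  moreover have "z - s \<ge> 1" using assms by simp
  ultimately show ?thesis using assms unfolding gapset_def by metis
qed

lemma mult_props:
  assumes "gapset G"
  shows "multiplicity G \<ge> 1 \<and> multiplicity G \<notin> G \<and>
         (\<forall>s. 1 \<le> s \<and> s < multiplicity G \<longrightarrow> s \<in> G)"
proof -
  have "finite G" using assms gapset_def by blast
  then obtain k where k: "\<forall>x\<in>G. x \<le> k" using finite_nat_set_iff_bounded_le by blast
  have ex: "Suc k \<ge> 1 \<and> Suc k \<notin> G" using k by auto
  have 1: "multiplicity G \<ge> 1 \<and> multiplicity G \<notin> G"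
    unfolding multiplicity_def using LeastI[of "\<lambda>s. s \<ge> 1 \<and> s \<notin> G", OF ex] by blast
  have 2: "\<forall>s. 1 \<le> s \<and> s < multiplicity G \<longrightarrow> s \<in> G"
    unfolding multiplicity_def using not_less_Least by blast
  show ?thesis using 1 2 by blast
qed

lemma conductor_eq:
  assumes "gapset G" "G \<noteq> {}"
  shows "conductor G = Max G + 1"
proof -
  have fin: "finite G" using assms gapset_def by blast
  show ?thesis unfolding conductor_def
  proof (rule Least_equality)
    show "1 \<le> Max G + 1 \<and> (\<forall>t. Max G + 1 + t \<notin> G)"
    proof (intro conjI allI)
      fix t
      show "Max G + 1 + t \<notin> G"
      proof
        assume "Max G + 1 + t \<in> G"
        then have "Max G + 1 + t \<le> Max G" using Max_ge[OF fin] by blast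
        then show False by simp
      qed
    qed simp
  next
    fix y assume y: "1 \<le> y \<and> (\<forall>t. y + t \<notin> G)"
    show "Max G + 1 \<le> y"
    proof (rule ccontr)
      assume "\<not> Max G + 1 \<le> y"
      then have "y \<le> Max G" by simp
      then have "y + (Max G - y) = Max G" by simp
      moreover have "Max G \<in> G" using Max_in[OF fin assms(2)] .
      ultimately show False using y by metis
    qed
  qed
qed

lemma consec:
  fixes L :: "nat list"
  assumes "sorted_wrt (<) L" "i+1 < length L" "x \<in> set L" "L!i < x"
  shows "L!(i+1) \<le> x"
proof -
  obtain j where j: "j < length L" "L!j = x" using assms(3) by (metis in_set_conv_nth)
  have "\<not> j \<le> i"
  proof
    assume "j \<le> i"
    then have "L!j \<le> L!i"
      using sorted_wrt_nth_less[OF assms(1), of j i] assms(2) by (cases "j = i") auto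
    then show False using j assms(4) by simp
  qed
  then have "i + 1 \<le> j" by simp
  then show ?thesis
    using sorted_wrt_nth_less[OF assms(1), of "i+1" j] j by (cases "i+1 = j") auto
qed

theorem mainTheorem14:
  fixes n :: nat and G :: "nat set"
  assumes "n \<ge> 1"
    and "gapset G"
    and "pure_sparse (2*n+1) G"
    and "genus G = 3*n+2"
  shows "depth G \<le> 3 \<and> (pseudo_symmetric G \<longrightarrow> depth G = 3)"
proof -
  have fin: "finite G" using assms(2) gapset_def by blast
  have cardG: "card G = 3*n+2" using assms(4) genus_def by simp
  have ne: "G \<noteq> {}" using cardG by auto
  define m where "m = multiplicity G"
  have m1: "m \<ge> 1" and mG: "m \<notin> G" and below: "\<And>s. 1 \<le> s \<Longrightarrow> s < m \<Longrightarrow> s \<in> G"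
    using mult_props[OF assms(2)] m_def by auto
  define F where "F = Max G"
  have FG: "F \<in> G" using Max_in[OF fin ne] F_def by simp
  have Fmax: "\<And>x. x \<in> G \<Longrightarrow> x \<le> F" using Max_ge[OF fin] F_def by simp
  have zG: "0 \<notin> G" using assms(2) gapset_def by blast
  have F1: "F \<ge> 1" using FG zG by (cases F) auto
  have cond: "conductor G = F + 1" using conductor_eq[OF assms(2) ne] F_def by simp
  define L where "L = sorted_list_of_set G"
  have Ls: "sorted_wrt (<) L" unfolding L_def by (simp add: strict_sorted_list_of_set)
  have Lset: "set L = G" unfolding L_def using fin by simp
  obtain i where i: "i + 1 < length L" "L!(i+1) - L!i = 2*n+1"
    using assms(3) unfolding pure_sparse_def Let_def L_def by blast
  define a where "a = L!i"
  define b where "b = L!(i+1)"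
  have aG: "a \<in> G" using i Lset a_def by (metis Suc_lessD add.commute nth_mem plus_1_eq_Suc)
  have bG: "b \<in> G" using i Lset b_def by (metis nth_mem)
  have ab: "b = a + 2*n+1" using i a_def b_def by simp
  have between: "\<And>x. x \<in> G \<Longrightarrow> a < x \<Longrightarrow> b \<le> x"
    using consec[OF Ls i(1)] Lset a_def b_def by blast
  have a1: "a \<ge> 1" using aG zG by (cases a) auto
  have mbig: "m \<ge> 2*n+1"
  proof (rule ccontr)
    assume "\<not> m \<ge> 2*n+1"
    then have mle: "m \<le> 2*n" by simp
    have "b - m \<in> G" using gap_sub[OF assms(2) bG mG m1] mle ab by simp
    moreover have "a < b - m" using mle ab by simp
    ultimately have "b \<le> b - m" using between by blast
    then show False using m1 mle ab by simp
  qed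
  \<comment> \<open>F <= 2g - 1\<close>
  have Fbound: "F \<le> 6*n+3"
  proof -
    define A where "A = {1..<F}"
    have inj: "inj_on (\<lambda>s. F - s) (A - G)" unfolding A_def by (rule inj_onI) auto
    have img: "(\<lambda>s. F - s) ` (A - G) \<subseteq> A \<inter> G"
    proof
      fix y assume "y \<in> (\<lambda>s. F - s) ` (A - G)"
      then obtain s where s: "s \<in> A" "s \<notin> G" "y = F - s" by auto
      have "F - s \<in> G" using gap_sub[OF assms(2) FG s(2)] s(1) A_def by simp
      then show "y \<in> A \<inter> G" using s A_def by auto
    qed
    have c1: "card (A - G) \<le> card (A \<inter> G)"
      using card_inj_on_le[OF inj img] A_def by simp
    have c2: "card A = card (A \<inter> G) + card (A - G)"
      unfolding A_def by (metis card_Int_Diff finite_atLeastLessThan)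
    have "A \<inter> G \<subseteq> G - {F}" unfolding A_def by auto
    then have "card (A \<inter> G) \<le> card (G - {F})" using fin by (intro card_mono) auto
    also have "\<dots> = 3*n+1" using cardG FG fin by simp
    finally have "card A \<le> 6*n+2" using c1 c2 by simp
    then show ?thesis unfolding A_def by simp
  qed
  have m2G: "2*m \<notin> G" using gap_add[OF assms(2) mG mG m1 m1] by (simp add: mult_2)
  have m3G: "3*m \<notin> G" using gap_add[OF assms(2) m2G mG] m1 by (simp add: add.commute)
  have Flt: "F < 3*m"
  proof -
    have "F \<le> 3*m" using Fbound mbig by simp
    moreover have "F \<noteq> 3*m" using FG m3G by auto
    ultimately show ?thesis by simp
  qed
  have mpos: "real m > 0" using m1 by simp
  have dep: "depth G = nat \<lceil>real (F+1) / real m\<rceil>" unfolding depth_def cond m_def by simp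
  have part1: "depth G \<le> 3"
  proof -
    have "real (F+1) / real m \<le> 3"
      using Flt mpos by (simp add: divide_le_eq)
    then have "\<lceil>real (F+1) / real m\<rceil> \<le> 3" by (simp add: ceiling_le_iff)
    then show ?thesis using dep by simp
  qed
  have part2: "depth G = 3" if ps: "pseudo_symmetric G"
  proof -
    have F6: "F = 6*n+2"
      using ps unfolding pseudo_symmetric_def frobenius_def genus_def cond cardG by simp
    have msmall: "m \<le> 3*n+1"
    proof (rule ccontr)
      assume "\<not> m \<le> 3*n+1"
      then have mge: "m \<ge> 3*n+2" by simp
      have sub1: "{1..<m} \<subseteq> G" using below by auto
      have "card {1..<m} \<le> card G" using card_mono[OF fin sub1] .
      then have mle: "m \<le> 3*n+3" using cardG by simp
      have Fm: "F \<ge> m" using F6 mle assms(1) by linarith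
      have sub: "insert F {1..<m} \<subseteq> G" using sub1 FG by auto
      have "card (insert F {1..<m}) = m" using Fm m1 by simp
      then have eq: "insert F {1..<m} = G" and m32: "m = 3*n+2"
        using card_seteq[OF fin sub] card_mono[OF fin sub] cardG mge by auto
      have "b \<ge> m"
      proof (rule ccontr)
        assume "\<not> b \<ge> m"
        then have "a + 1 \<in> G" using below ab by simp
        then have "b \<le> a + 1" using between by simp
        then show False using ab assms(1) by simp
      qed
      then have "b = F" using bG eq by auto
      then have "a = 4*n+1" using F6 ab by simp
      then show False using aG eq m32 F6 assms(1) by auto
    qed
    have "real (F+1) / real m > 2"
      using msmall F6 mpos by (simp add: less_divide_eq)
    then have "(2::int) < \<lceil>real (F+1) / real m\<rceil>" by (simp add: less_ceiling_iff)
    then have "\<lceil>real (F+1) / real m\<rceil> \<ge> 3" by simp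
    moreover have "real (F+1) / real m \<le> 3"
      using Flt mpos by (simp add: divide_le_eq)
    then have "\<lceil>real (F+1) / real m\<rceil> \<le> 3" by (simp add: ceiling_le_iff)
    ultimately have "\<lceil>real (F+1) / real m\<rceil> = 3" by linarith
    then show ?thesis using dep by simp
  qed
  show ?thesis using part1 part2 by blast
qed

end
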